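(* Let $X$ be a connected quandle, $a\in X$, and let $\widetilde X$ be the quandle $\mathrm{Ker}(\varepsilon_0)$ with operation $g\lhd h=e_a^{-1}gh^{-1}e_ah$. Then $\widetilde X$ is connected.
   Context: A quandle is a set $X$ with a binary operation $\lhd$ such that $a\lhd a=a$, each $x\mapsto x\lhd a$ is bijective, and $(a\lhd b)\lhd c=(a\lhd c)\lhd(b\lhd c)$. The adjoint group $\mathrm{As}(X)$ has generators $e_x$ ($x\in X$) and relations $e_{x\lhd y}=e_y^{-1}e_xe_y$; it acts on $X$ by $x\cdot e_y=x\lhd y$, and $X$ is connected if this action is transitive. For connected $X$, $\varepsilon_0:\mathrm{As}(X)\to\mathbb{Z}$ is the homomorphism with $\varepsilon_0(e_x)=1$ for all $x$. *)

theory Defs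
  imports "HOL-Algebra.Group"
begin

definition quandle :: "'a set \<Rightarrow> ('a \<Rightarrow> 'a \<Rightarrow> 'a) \<Rightarrow> bool" where
  "quandle X op \<longleftrightarrow>
     (\<forall>x\<in>X. \<forall>y\<in>X. op x y \<in> X) \<and>
     (\<forall>a\<in>X. op a a = a) \<and>
     (\<forall>a\<in>X. bij_betw (\<lambda>x. op x a) X X) \<and>
     (\<forall>a\<in>X. \<forall>b\<in>X. \<forall>c\<in>X. op (op a b) c = op (op a c) (op b c))"

text \<open>Words: lists of (generator, sign); (x, True) stands for e_x, (x, False) for e_x^{-1}.
  The congruence generated by free cancellation and the relations e_{x \<lhd> y} = e_y^{-1} e_x e_y.\<close>

inductive as_rel :: "'a set \<Rightarrow> ('a \<Rightarrow> 'a \<Rightarrow> 'a) \<Rightarrow> ('a \<times> bool) list \<Rightarrow> ('a \<times> bool) list \<Rightarrow> bool"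
  for X :: "'a set" and op :: "'a \<Rightarrow> 'a \<Rightarrow> 'a" where
  as_refl: "w \<in> lists (X \<times> UNIV) \<Longrightarrow> as_rel X op w w"
| as_sym: "as_rel X op u v \<Longrightarrow> as_rel X op v u"
| as_trans: "as_rel X op u v \<Longrightarrow> as_rel X op v w \<Longrightarrow> as_rel X op u w"
| as_ctxt: "as_rel X op u v \<Longrightarrow> p \<in> lists (X \<times> UNIV) \<Longrightarrow> q \<in> lists (X \<times> UNIV)
             \<Longrightarrow> as_rel X op (p @ u @ q) (p @ v @ q)"
| as_cancel: "x \<in> X \<Longrightarrow> as_rel X op [(x, b), (x, \<not> b)] []"
| as_quandle: "x \<in> X \<Longrightarrow> y \<in> X \<Longrightarrow>
             as_rel X op [(op x y, True)] [(y, False), (x, True), (y, True)]"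

definition as_class :: "'a set \<Rightarrow> ('a \<Rightarrow> 'a \<Rightarrow> 'a) \<Rightarrow> ('a \<times> bool) list \<Rightarrow> ('a \<times> bool) list set" where
  "as_class X op w = {v. as_rel X op w v}"

definition as_rep :: "('a \<times> bool) list set \<Rightarrow> ('a \<times> bool) list" where
  "as_rep A = (SOME w. w \<in> A)"

definition As :: "'a set \<Rightarrow> ('a \<Rightarrow> 'a \<Rightarrow> 'a) \<Rightarrow> ('a \<times> bool) list set monoid" where
  "As X op = \<lparr> carrier = as_class X op ` lists (X \<times> UNIV),
               mult = (\<lambda>A B. as_class X op (as_rep A @ as_rep B)),
               one = as_class X op [] \<rparr>"

definition as_gen :: "'a set \<Rightarrow> ('a \<Rightarrow> 'a \<Rightarrow> 'a) \<Rightarrow> 'a \<Rightarrow> ('a \<times> bool) list set" where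
  "as_gen X op x = as_class X op [(x, True)]"

definition eps_word :: "('a \<times> bool) list \<Rightarrow> int" where
  "eps_word w = sum_list (map (\<lambda>(x, b). if b then 1 else -1) w)"

definition eps0 :: "('a \<times> bool) list set \<Rightarrow> int" where
  "eps0 A = eps_word (as_rep A)"

text \<open>X is connected iff the action of As(X) on X (x \<cdot> e_y = x \<lhd> y) is transitive,
  i.e. any two elements are related by a finite chain of steps x \<mapsto> x \<lhd> y or its inverse
  (the orbits of the group generated by the e_y and their inverses).\<close>

definition quandle_step :: "'a set \<Rightarrow> ('a \<Rightarrow> 'a \<Rightarrow> 'a) \<Rightarrow> ('a \<times> 'a) set" where
  "quandle_step X op = {(u, op u z) | u z. u \<in> X \<and> z \<in> X}"

definition quandle_connected :: "'a set \<Rightarrow> ('a \<Rightarrow> 'a \<Rightarrow> 'a) \<Rightarrow> bool" where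
  "quandle_connected X op \<longleftrightarrow>
     (\<forall>x\<in>X. \<forall>y\<in>X. (x, y) \<in> (quandle_step X op \<union> (quandle_step X op)\<inverse>)\<^sup>*)"

definition tilde_carrier :: "'a set \<Rightarrow> ('a \<Rightarrow> 'a \<Rightarrow> 'a) \<Rightarrow> ('a \<times> bool) list set set" where
  "tilde_carrier X op = {g \<in> carrier (As X op). eps0 g = 0}"

definition tilde_op :: "'a set \<Rightarrow> ('a \<Rightarrow> 'a \<Rightarrow> 'a) \<Rightarrow> 'a
     \<Rightarrow> ('a \<times> bool) list set \<Rightarrow> ('a \<times> bool) list set \<Rightarrow> ('a \<times> bool) list set" where
  "tilde_op X op a g h =
     inv\<^bsub>As X op\<^esub> (as_gen X op a) \<otimes>\<^bsub>As X op\<^esub> g \<otimes>\<^bsub>As X op\<^esub> inv\<^bsub>As X op\<^esub> h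
       \<otimes>\<^bsub>As X op\<^esub> as_gen X op a \<otimes>\<^bsub>As X op\<^esub> h"

end

theory Submission
  imports Defs
begin

definition winv :: "('a \<times> bool) list \<Rightarrow> ('a \<times> bool) list" where
  "winv w = rev (map (\<lambda>(x, b). (x, \<not> b)) w)"

lemma as_rel_lists:
  assumes Q: "quandle X op"
  shows "as_rel X op u v \<Longrightarrow> u \<in> lists (X \<times> UNIV) \<and> v \<in> lists (X \<times> UNIV)"
  by (induction rule: as_rel.induct) (use Q in \<open>auto simp: quandle_def\<close>)

lemma eps_inv: "as_rel X op u v \<Longrightarrow> eps_word u = eps_word v"
  by (induction rule: as_rel.induct) (auto simp: eps_word_def)

lemma cls_eq: "as_rel X op u v \<Longrightarrow> as_class X op u = as_class X op v"
  unfolding as_class_def by (auto intro: as_sym as_trans)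

lemma ctxt_r: "as_rel X op u u' \<Longrightarrow> v \<in> lists (X \<times> UNIV) \<Longrightarrow> as_rel X op (u @ v) (u' @ v)"
  using as_ctxt[of X op u u' "[]" v] by simp

lemma ctxt_l: "as_rel X op v v' \<Longrightarrow> u \<in> lists (X \<times> UNIV) \<Longrightarrow> as_rel X op (u @ v) (u @ v')"
  using as_ctxt[of X op v v' u "[]"] by simp

lemma rep_cls:
  assumes "u \<in> lists (X \<times> UNIV)"
  shows "as_rel X op u (as_rep (as_class X op u))"
proof -
  have "u \<in> as_class X op u" using assms by (simp add: as_class_def as_refl)
  then have "as_rep (as_class X op u) \<in> as_class X op u"
    unfolding as_rep_def by (rule someI)
  then show ?thesis by (simp add: as_class_def)
qed

lemma winv_lists: "w \<in> lists (X \<times> UNIV) \<Longrightarrow> winv w \<in> lists (X \<times> UNIV)"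
  by (auto simp: winv_def)

lemma winv_cancel:
  assumes Q: "quandle X op"
  shows "w \<in> lists (X \<times> UNIV) \<Longrightarrow> as_rel X op (winv w @ w) []"
proof (induction w)
  case Nil
  then show ?case by (simp add: winv_def as_refl)
next
  case (Cons s w)
  obtain x b where s: "s = (x, b)" by force
  have x: "x \<in> X" and w: "w \<in> lists (X \<times> UNIV)" using Cons.prems s by auto
  have "winv (s # w) @ s # w = winv w @ ([(x, \<not> b), (x, \<not>\<not> b)] @ w)"
    by (simp add: winv_def s)
  moreover have "as_rel X op (winv w @ ([(x, \<not> b), (x, \<not>\<not> b)] @ w)) (winv w @ ([] @ w))"
    by (rule ctxt_l[OF ctxt_r[OF as_cancel[OF x] w] winv_lists[OF w]])
  ultimately show ?case using Cons.IH[OF w] by (auto intro: as_trans)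
qed

context
  fixes X :: "'a set" and op :: "'a \<Rightarrow> 'a \<Rightarrow> 'a"
  assumes Q: "quandle X op"
begin

lemma carrier_rep:
  assumes "A \<in> carrier (As X op)"
  shows "as_rep A \<in> lists (X \<times> UNIV) \<and> A = as_class X op (as_rep A)"
proof -
  obtain u where u: "u \<in> lists (X \<times> UNIV)" "A = as_class X op u"
    using assms unfolding As_def by auto
  have r: "as_rel X op u (as_rep A)" using rep_cls[OF u(1)] u(2) by simp
  have "A = as_class X op (as_rep A)" using u(2) cls_eq[OF r] by (rule trans)
  then show ?thesis using as_rel_lists[OF Q r] by blast
qed

lemma mult_cls:
  assumes "u \<in> lists (X \<times> UNIV)" "v \<in> lists (X \<times> UNIV)"
  shows "as_class X op u \<otimes>\<^bsub>As X op\<^esub> as_class X op v = as_class X op (u @ v)"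
proof -
  have r1: "as_rel X op u (as_rep (as_class X op u))" by (rule rep_cls[OF assms(1)])
  have r2: "as_rel X op v (as_rep (as_class X op v))" by (rule rep_cls[OF assms(2)])
  have "as_rel X op (u @ v) (as_rep (as_class X op u) @ v)" by (rule ctxt_r[OF r1 assms(2)])
  moreover have "as_rel X op (as_rep (as_class X op u) @ v) (as_rep (as_class X op u) @ as_rep (as_class X op v))"
    by (rule ctxt_l[OF r2]) (use as_rel_lists[OF Q r1] in auto)
  ultimately have "as_rel X op (u @ v) (as_rep (as_class X op u) @ as_rep (as_class X op v))"
    by (rule as_trans)
  then have "as_class X op (as_rep (as_class X op u) @ as_rep (as_class X op v)) = as_class X op (u @ v)"
    by (rule cls_eq[OF as_sym])
  then show ?thesis by (simp add: As_def)
qed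

lemma cls_carrier: "u \<in> lists (X \<times> UNIV) \<Longrightarrow> as_class X op u \<in> carrier (As X op)"
  by (simp add: As_def)

lemma As_group: "group (As X op)"
proof (rule groupI)
  fix A B assume A: "A \<in> carrier (As X op)" and B: "B \<in> carrier (As X op)"
  show "A \<otimes>\<^bsub>As X op\<^esub> B \<in> carrier (As X op)"
    using carrier_rep[OF A] carrier_rep[OF B] by (simp add: As_def)
next
  show "\<one>\<^bsub>As X op\<^esub> \<in> carrier (As X op)" by (simp add: As_def)
next
  fix A B C assume A: "A \<in> carrier (As X op)" and B: "B \<in> carrier (As X op)"
    and C: "C \<in> carrier (As X op)"
  then obtain u v w where "u \<in> lists (X \<times> UNIV)" "v \<in> lists (X \<times> UNIV)" "w \<in> lists (X \<times> UNIV)"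
    "A = as_class X op u" "B = as_class X op v" "C = as_class X op w"
    using carrier_rep by metis
  then show "A \<otimes>\<^bsub>As X op\<^esub> B \<otimes>\<^bsub>As X op\<^esub> C = A \<otimes>\<^bsub>As X op\<^esub> (B \<otimes>\<^bsub>As X op\<^esub> C)"
    by (simp add: mult_cls)
next
  fix A assume A: "A \<in> carrier (As X op)"
  then obtain u where "u \<in> lists (X \<times> UNIV)" "A = as_class X op u" using carrier_rep by metis
  then show "\<one>\<^bsub>As X op\<^esub> \<otimes>\<^bsub>As X op\<^esub> A = A"
    using mult_cls[of "[]" u] by (simp add: As_def)
next
  fix A assume A: "A \<in> carrier (As X op)"
  then obtain u where u: "u \<in> lists (X \<times> UNIV)" "A = as_class X op u" using carrier_rep by metis
  have "as_class X op (winv u) \<otimes>\<^bsub>As X op\<^esub> A = \<one>\<^bsub>As X op\<^esub>"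
    using u mult_cls[OF winv_lists[OF u(1)] u(1)] cls_eq[OF winv_cancel[OF Q u(1)]]
    by (simp add: As_def)
  then show "\<exists>B\<in>carrier (As X op). B \<otimes>\<^bsub>As X op\<^esub> A = \<one>\<^bsub>As X op\<^esub>"
    using cls_carrier[OF winv_lists[OF u(1)]] by blast
qed

end

context group
begin

lemma cancel1: "x \<in> carrier G \<Longrightarrow> y \<in> carrier G \<Longrightarrow> x \<otimes> (inv x \<otimes> y) = y"
  by (simp add: m_assoc[symmetric])

lemma cancel2: "x \<in> carrier G \<Longrightarrow> y \<in> carrier G \<Longrightarrow> inv x \<otimes> (x \<otimes> y) = y"
  by (simp add: m_assoc[symmetric])

lemmas gsimps = m_assoc cancel1 cancel2 inv_mult_group

lemma conj_step1:
  assumes C: "ea \<in> carrier G" "h \<in> carrier G" "ez \<in> carrier G" "ec \<in> carrier G"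
    and H: "inv h \<otimes> ea \<otimes> h = ec"
  shows "inv (inv ea \<otimes> h \<otimes> ez) \<otimes> ea \<otimes> (inv ea \<otimes> h \<otimes> ez) = inv ez \<otimes> ec \<otimes> ez"
proof -
  have "inv (inv ea \<otimes> h \<otimes> ez) \<otimes> ea \<otimes> (inv ea \<otimes> h \<otimes> ez) = inv ez \<otimes> (inv h \<otimes> ea \<otimes> h) \<otimes> ez"
    using C by (simp add: gsimps)
  then show ?thesis using H by simp
qed

lemma conj_step2:
  assumes C: "ea \<in> carrier G" "h \<in> carrier G" "ez \<in> carrier G" "ec \<in> carrier G" "ed \<in> carrier G"
    and H: "inv h \<otimes> ea \<otimes> h = ec" and D: "ec = inv ez \<otimes> ed \<otimes> ez"
  shows "inv (ea \<otimes> h \<otimes> inv ez) \<otimes> ea \<otimes> (ea \<otimes> h \<otimes> inv ez) = ed"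
proof -
  have "inv (ea \<otimes> h \<otimes> inv ez) \<otimes> ea \<otimes> (ea \<otimes> h \<otimes> inv ez) = ez \<otimes> (inv h \<otimes> ea \<otimes> h) \<otimes> inv ez"
    using C by (simp add: gsimps)
  also have "\<dots> = ez \<otimes> (inv ez \<otimes> ed \<otimes> ez) \<otimes> inv ez" using H D by simp
  also have "\<dots> = ed" using C by (simp add: gsimps)
  finally show ?thesis .
qed

lemma tilde_alg:
  assumes C: "ea \<in> carrier G" "h \<in> carrier G" "U \<in> carrier G"
  shows "inv ea \<otimes> U \<otimes> inv h \<otimes> ea \<otimes> h = inv ea \<otimes> U \<otimes> (inv h \<otimes> ea \<otimes> h)"
  using C by (simp add: m_assoc)

lemma m1_alg:
  assumes C: "ea \<in> carrier G" "U \<in> carrier G" "eb \<in> carrier G" "ec \<in> carrier G"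
  shows "inv ea \<otimes> (U \<otimes> eb \<otimes> inv ec) \<otimes> ec = inv ea \<otimes> U \<otimes> eb"
  using C by (simp add: gsimps)

lemma m2_alg:
  assumes C: "ea \<in> carrier G" "U \<in> carrier G" "eb \<in> carrier G" "ec \<in> carrier G"
  shows "inv ea \<otimes> (ea \<otimes> U \<otimes> inv ec) \<otimes> eb = U \<otimes> inv ec \<otimes> eb"
    and "inv ea \<otimes> (ea \<otimes> U \<otimes> inv ec) \<otimes> ec = U"
  using C by (simp_all add: gsimps)

lemma snoc_alg1:
  assumes C: "W \<in> carrier G" "p \<in> carrier G" "ex \<in> carrier G" "ey \<in> carrier G" "z \<in> carrier G"
    and H: "inv p \<otimes> ex \<otimes> p = ey"
  shows "W \<otimes> ex \<otimes> (p \<otimes> z) = W \<otimes> p \<otimes> ey \<otimes> z"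
    and "W \<otimes> inv ex \<otimes> (p \<otimes> z) = W \<otimes> p \<otimes> inv ey \<otimes> z"
proof -
  have "p \<otimes> ey = p \<otimes> (inv p \<otimes> (ex \<otimes> p))" using H C by (simp add: m_assoc)
  also have "\<dots> = ex \<otimes> p" using C by (simp add: cancel1)
  finally have e: "ex \<otimes> p = p \<otimes> ey" by simp
  have e2: "inv ex \<otimes> p = p \<otimes> inv ey"
  proof -
    have "inv ex \<otimes> p = inv ex \<otimes> (p \<otimes> ey) \<otimes> inv ey" using C by (simp add: gsimps)
    also have "\<dots> = p \<otimes> inv ey" using C by (simp add: e[symmetric] gsimps)
    finally show ?thesis .
  qed
  have "W \<otimes> ex \<otimes> (p \<otimes> z) = W \<otimes> (ex \<otimes> p) \<otimes> z" using C by (simp add: m_assoc)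
  then show "W \<otimes> ex \<otimes> (p \<otimes> z) = W \<otimes> p \<otimes> ey \<otimes> z" using C by (simp add: e m_assoc)
  have "W \<otimes> inv ex \<otimes> (p \<otimes> z) = W \<otimes> (inv ex \<otimes> p) \<otimes> z" using C by (simp add: m_assoc)
  then show "W \<otimes> inv ex \<otimes> (p \<otimes> z) = W \<otimes> p \<otimes> inv ey \<otimes> z" using C by (simp add: e2 m_assoc)
qed

lemma good_alg:
  assumes C: "p \<in> carrier G" "ex \<in> carrier G" "z \<in> carrier G"
  shows "inv (p \<otimes> z) \<otimes> ex \<otimes> (p \<otimes> z) = inv z \<otimes> (inv p \<otimes> ex \<otimes> p) \<otimes> z"
  using C by (simp add: gsimps)

lemma good_alg2:
  assumes C: "ea \<in> carrier G" "ey' \<in> carrier G"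
  shows "inv (inv ea) \<otimes> (inv ea \<otimes> ey' \<otimes> ea) \<otimes> inv ea = ey'"
  using C by (simp add: gsimps)

end


context
  fixes X :: "'a set" and op :: "'a \<Rightarrow> 'a \<Rightarrow> 'a"
  assumes Q: "quandle X op"
begin

interpretation G: group "As X op" by (rule As_group[OF Q])

lemma gen_carrier: "x \<in> X \<Longrightarrow> as_gen X op x \<in> carrier (As X op)"
  unfolding as_gen_def by (rule cls_carrier[OF Q]) auto

lemma inv_gen: "x \<in> X \<Longrightarrow> inv\<^bsub>As X op\<^esub> (as_gen X op x) = as_class X op [(x, False)]"
proof -
  assume x: "x \<in> X"
  have "as_class X op [(x, False)] \<otimes>\<^bsub>As X op\<^esub> as_gen X op x = as_class X op ([(x, False)] @ [(x, True)])"
    unfolding as_gen_def by (rule mult_cls[OF Q]) (use x in auto)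
  also have "\<dots> = as_class X op []" using cls_eq[OF as_cancel[where b=False, OF x]] by simp
  finally have "as_class X op [(x, False)] \<otimes>\<^bsub>As X op\<^esub> as_gen X op x = \<one>\<^bsub>As X op\<^esub>"
    by (simp add: As_def)
  then show ?thesis by (rule G.inv_equality) (use x gen_carrier cls_carrier[OF Q, of "[(x, False)]"] in auto)
qed

lemma gen_quandle:
  assumes x: "x \<in> X" and y: "y \<in> X"
  shows "as_gen X op (op x y) = inv\<^bsub>As X op\<^esub> (as_gen X op y) \<otimes>\<^bsub>As X op\<^esub> as_gen X op x \<otimes>\<^bsub>As X op\<^esub> as_gen X op y"
proof -
  have "inv\<^bsub>As X op\<^esub> (as_gen X op y) \<otimes>\<^bsub>As X op\<^esub> as_gen X op x \<otimes>\<^bsub>As X op\<^esub> as_gen X op y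
      = as_class X op ([(y, False)] @ [(x, True)] @ [(y, True)])"
    unfolding inv_gen[OF y] unfolding as_gen_def using x y
    by (simp add: mult_cls[OF Q] del: append.simps)
  also have "\<dots> = as_class X op [(op x y, True)]"
    using cls_eq[OF as_quandle[OF x y]] by simp
  finally show ?thesis by (simp add: as_gen_def)
qed

lemma eps_cls: "u \<in> lists (X \<times> UNIV) \<Longrightarrow> eps0 (as_class X op u) = eps_word u"
  unfolding eps0_def using eps_inv[OF rep_cls] by metis

lemma eps_mult:
  assumes A: "A \<in> carrier (As X op)" and B: "B \<in> carrier (As X op)"
  shows "eps0 (A \<otimes>\<^bsub>As X op\<^esub> B) = eps0 A + eps0 B"
proof -
  have "eps0 (A \<otimes>\<^bsub>As X op\<^esub> B) = eps0 (as_class X op (as_rep A @ as_rep B))"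
    by (simp add: As_def)
  also have "\<dots> = eps_word (as_rep A @ as_rep B)"
    by (rule eps_cls) (use carrier_rep[OF Q A] carrier_rep[OF Q B] in auto)
  also have "\<dots> = eps0 A + eps0 B" by (simp add: eps_word_def eps0_def)
  finally show ?thesis .
qed

lemma eps_gen: "x \<in> X \<Longrightarrow> eps0 (as_gen X op x) = 1"
  unfolding as_gen_def by (subst eps_cls) (auto simp: eps_word_def)

lemma eps_inv_gen: "x \<in> X \<Longrightarrow> eps0 (inv\<^bsub>As X op\<^esub> (as_gen X op x)) = -1"
  unfolding inv_gen by (subst eps_cls) (auto simp: eps_word_def)

lemma cls_snoc:
  assumes w: "w \<in> lists (X \<times> UNIV)" and x: "x \<in> X"
  shows "as_class X op (w @ [(x, True)]) = as_class X op w \<otimes>\<^bsub>As X op\<^esub> as_gen X op x"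
    and "as_class X op (w @ [(x, False)]) = as_class X op w \<otimes>\<^bsub>As X op\<^esub> inv\<^bsub>As X op\<^esub> as_gen X op x"
  using w x by (simp add: as_gen_def mult_cls[OF Q], simp add: inv_gen mult_cls[OF Q])

lemma eps_one: "eps0 \<one>\<^bsub>As X op\<^esub> = 0"
  using eps_cls[of "[]"] by (simp add: As_def eps_word_def)

end


locale qa =
  fixes X :: "'a set" and op :: "'a \<Rightarrow> 'a \<Rightarrow> 'a" and a :: 'a
  assumes Q: "quandle X op" and Cn: "quandle_connected X op" and aX: "a \<in> X"
begin

interpretation G: group "As X op" by (rule As_group[OF Q])

abbreviation mm (infixl "\<cdot>" 70) where "x \<cdot> y \<equiv> x \<otimes>\<^bsub>As X op\<^esub> y"
abbreviation ii where "ii x \<equiv> inv\<^bsub>As X op\<^esub> x"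
abbreviation ee where "ee x \<equiv> as_gen X op x"
abbreviation KK where "KK \<equiv> tilde_carrier X op"
abbreviation SS where "SS \<equiv> quandle_step KK (tilde_op X op a)"
abbreviation RR where "RR \<equiv> (SS \<union> SS\<inverse>)\<^sup>*"
abbreviation C where "C \<equiv> carrier (As X op)"

lemma kk_iff: "U \<in> KK \<longleftrightarrow> U \<in> C \<and> eps0 U = 0"
  by (simp add: tilde_carrier_def)

lemma ec: "x \<in> X \<Longrightarrow> ee x \<in> C" by (rule gen_carrier[OF Q])

lemma one_KK: "\<one>\<^bsub>As X op\<^esub> \<in> KK"
  using eps_one[OF Q] by (simp add: kk_iff)

lemma part1:
  assumes "(a, c) \<in> (quandle_step X op \<union> (quandle_step X op)\<inverse>)\<^sup>*"
  shows "c \<in> X \<and> (\<exists>h\<in>KK. ii h \<cdot> ee a \<cdot> h = ee c)"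
  using assms
proof (induction rule: rtrancl_induct)
  case base
  have "ii \<one>\<^bsub>As X op\<^esub> \<cdot> ee a \<cdot> \<one>\<^bsub>As X op\<^esub> = ee a" using ec[OF aX] by simp
  then show ?case using aX one_KK by blast
next
  case (step c d)
  from step.IH obtain h where c: "c \<in> X" and h: "h \<in> KK" "ii h \<cdot> ee a \<cdot> h = ee c" by blast
  have hC: "h \<in> C" and h0: "eps0 h = 0" using h(1) by (auto simp: kk_iff)
  from step.hyps(2) show ?case
  proof
    assume "(c, d) \<in> quandle_step X op"
    then obtain z where z: "z \<in> X" and d: "d = op c z" by (auto simp: quandle_step_def)
    have dX: "d \<in> X" using Q c z d by (auto simp: quandle_def)
    define h' where "h' = ii (ee a) \<cdot> h \<cdot> ee z"
    have h'C: "h' \<in> C" unfolding h'_def using ec aX z hC by simp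
    have "eps0 h' = 0" unfolding h'_def using ec aX z hC h0
      by (simp add: eps_mult[OF Q] eps_gen[OF Q] eps_inv_gen[OF Q])
    then have "h' \<in> KK" using h'C by (simp add: kk_iff)
    moreover have "ii h' \<cdot> ee a \<cdot> h' = ee d"
      unfolding h'_def d gen_quandle[OF Q c z]
      by (rule G.conj_step1) (use ec aX z hC c h(2) in auto)
    ultimately show ?thesis using dX by blast
  next
    assume "(c, d) \<in> (quandle_step X op)\<inverse>"
    then obtain z where z: "z \<in> X" and dX: "d \<in> X" and cd: "c = op d z" by (auto simp: quandle_step_def)
    define h' where "h' = ee a \<cdot> h \<cdot> ii (ee z)"
    have h'C: "h' \<in> C" unfolding h'_def using ec aX z hC by simp
    have "eps0 h' = 0" unfolding h'_def using ec aX z hC h0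
      by (simp add: eps_mult[OF Q] eps_gen[OF Q] eps_inv_gen[OF Q])
    then have "h' \<in> KK" using h'C by (simp add: kk_iff)
    moreover have "ii h' \<cdot> ee a \<cdot> h' = ee d"
      unfolding h'_def
      by (rule G.conj_step2[of _ _ _ "ee c"]) (use ec aX z hC c dX h(2) gen_quandle[OF Q dX z] cd in auto)
    ultimately show ?thesis using dX by blast
  qed
qed

lemma conj_ex:
  assumes b: "b \<in> X" shows "\<exists>h\<in>KK. ii h \<cdot> ee a \<cdot> h = ee b"
proof -
  have "(a, b) \<in> (quandle_step X op \<union> (quandle_step X op)\<inverse>)\<^sup>*"
    using Cn aX b unfolding quandle_connected_def by blast
  from part1[OF this] show ?thesis by blast
qed

lemma tstep:
  assumes U: "U \<in> KK" and h: "h \<in> KK" and b: "b \<in> X" and H: "ii h \<cdot> ee a \<cdot> h = ee b"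
  shows "tilde_op X op a U h = ii (ee a) \<cdot> U \<cdot> ee b" and "(U, tilde_op X op a U h) \<in> SS"
proof -
  show "tilde_op X op a U h = ii (ee a) \<cdot> U \<cdot> ee b"
  proof -
    have "U \<in> C" "h \<in> C" using U h by (auto simp: kk_iff)
    then show ?thesis
      unfolding tilde_op_def using G.tilde_alg[of "ee a" h U] ec[OF aX] H by simp
  qed
  show "(U, tilde_op X op a U h) \<in> SS" using U h unfolding quandle_step_def by blast
qed

lemma M1:
  assumes U: "U \<in> KK" and b: "b \<in> X" and c: "c \<in> X"
  shows "U \<cdot> ee b \<cdot> ii (ee c) \<in> KK \<and> (U, U \<cdot> ee b \<cdot> ii (ee c)) \<in> RR"
proof -
  obtain hb where hb: "hb \<in> KK" "ii hb \<cdot> ee a \<cdot> hb = ee b" using conj_ex[OF b] by blast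
  obtain hc where hc: "hc \<in> KK" "ii hc \<cdot> ee a \<cdot> hc = ee c" using conj_ex[OF c] by blast
  have UC: "U \<in> C" and U0: "eps0 U = 0" using U by (auto simp: kk_iff)
  define W where "W = U \<cdot> ee b \<cdot> ii (ee c)"
  have WC: "W \<in> C" unfolding W_def using ec b c UC by simp
  have "eps0 W = 0" unfolding W_def using ec b c UC U0
    by (simp add: eps_mult[OF Q] eps_gen[OF Q] eps_inv_gen[OF Q])
  then have W: "W \<in> KK" using WC by (simp add: kk_iff)
  have s1: "(U, ii (ee a) \<cdot> U \<cdot> ee b) \<in> SS" using tstep[OF U hb(1) b hb(2)] by simp
  have "tilde_op X op a W hc = ii (ee a) \<cdot> U \<cdot> ee b"
    using tstep(1)[OF W hc(1) c hc(2)] G.m1_alg[of "ee a" U "ee b" "ee c"] ec aX b c UC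
    unfolding W_def by simp
  then have s2: "(W, ii (ee a) \<cdot> U \<cdot> ee b) \<in> SS" using tstep(2)[OF W hc(1) c hc(2)] by simp
  have r1: "(U, ii (ee a) \<cdot> U \<cdot> ee b) \<in> RR" using s1 by blast
  have r2: "(ii (ee a) \<cdot> U \<cdot> ee b, W) \<in> RR" using s2 by blast
  have "(U, W) \<in> RR" using r1 r2 by (rule rtrancl_trans)
  then show ?thesis using W unfolding W_def by simp
qed

lemma M2:
  assumes U: "U \<in> KK" and b: "b \<in> X" and c: "c \<in> X"
  shows "U \<cdot> ii (ee c) \<cdot> ee b \<in> KK \<and> (U, U \<cdot> ii (ee c) \<cdot> ee b) \<in> RR"
proof -
  obtain hb where hb: "hb \<in> KK" "ii hb \<cdot> ee a \<cdot> hb = ee b" using conj_ex[OF b] by blast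
  obtain hc where hc: "hc \<in> KK" "ii hc \<cdot> ee a \<cdot> hc = ee c" using conj_ex[OF c] by blast
  have UC: "U \<in> C" and U0: "eps0 U = 0" using U by (auto simp: kk_iff)
  define W where "W = ee a \<cdot> U \<cdot> ii (ee c)"
  have WC: "W \<in> C" unfolding W_def using ec aX c UC by simp
  have "eps0 W = 0" unfolding W_def using ec aX c UC U0
    by (simp add: eps_mult[OF Q] eps_gen[OF Q] eps_inv_gen[OF Q])
  then have W: "W \<in> KK" using WC by (simp add: kk_iff)
  have "tilde_op X op a W hc = U"
    using tstep(1)[OF W hc(1) c hc(2)] G.m2_alg(2)[of "ee a" U "ee b" "ee c"] ec aX b c UC
    unfolding W_def by simp
  then have s1: "(W, U) \<in> SS" using tstep(2)[OF W hc(1) c hc(2)] by simp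
  have "tilde_op X op a W hb = U \<cdot> ii (ee c) \<cdot> ee b"
    using tstep(1)[OF W hb(1) b hb(2)] G.m2_alg(1)[of "ee a" U "ee b" "ee c"] ec aX b c UC
    unfolding W_def by simp
  then have s2: "(W, U \<cdot> ii (ee c) \<cdot> ee b) \<in> SS" using tstep(2)[OF W hb(1) b hb(2)] by simp
  have r1: "(U, W) \<in> RR" using s1 by blast
  have r2: "(W, U \<cdot> ii (ee c) \<cdot> ee b) \<in> RR" using s2 by blast
  have "(U, U \<cdot> ii (ee c) \<cdot> ee b) \<in> RR" using r1 r2 by (rule rtrancl_trans)
  moreover have "U \<cdot> ii (ee c) \<cdot> ee b \<in> C" using ec b c UC by simp
  moreover have "eps0 (U \<cdot> ii (ee c) \<cdot> ee b) = 0" using ec b c UC U0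
    by (simp add: eps_mult[OF Q] eps_gen[OF Q] eps_inv_gen[OF Q])
  ultimately show ?thesis by (simp add: kk_iff)
qed


definition good where "good p \<longleftrightarrow> (\<forall>x\<in>X. \<exists>y\<in>X. ii p \<cdot> ee x \<cdot> p = ee y)"

abbreviation PP :: "('a \<times> bool) list \<Rightarrow> ('a \<times> bool) list set" where "PP w \<equiv> ee a [^]\<^bsub>As X op\<^esub> (- eps_word w)"

lemma sym_rt: "(x, y) \<in> (S \<union> S\<inverse>)\<^sup>* \<Longrightarrow> (y, x) \<in> (S \<union> S\<inverse>)\<^sup>*"
proof -
  assume "(x, y) \<in> (S \<union> S\<inverse>)\<^sup>*"
  then have "(y, x) \<in> ((S \<union> S\<inverse>)\<inverse>)\<^sup>*" by (rule rtrancl_converseI)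
  moreover have "(S \<union> S\<inverse>)\<inverse> = S \<union> S\<inverse>" by auto
  ultimately show ?thesis by simp
qed

lemma main:
  "w \<in> lists (X \<times> UNIV) \<Longrightarrow>
    good (PP w) \<and> as_class X op w \<cdot> PP w \<in> KK \<and> (\<one>\<^bsub>As X op\<^esub>, as_class X op w \<cdot> PP w) \<in> RR"
proof (induction w rule: rev_induct)
  case Nil
  have e: "eps_word [] = 0" by (simp add: eps_word_def)
  have o: "as_class X op [] = \<one>\<^bsub>As X op\<^esub>" by (simp add: As_def)
  have "good \<one>\<^bsub>As X op\<^esub>" unfolding good_def using ec by auto
  moreover have "PP [] = \<one>\<^bsub>As X op\<^esub>" unfolding e by simp
  ultimately show ?case using o one_KK by simp
next
  case (snoc s w)
  obtain x b where s: "s = (x, b)" by force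
  have w: "w \<in> lists (X \<times> UNIV)" and x: "x \<in> X" using snoc.prems s by auto
  define p where "p = PP w"
  define n where "n = eps_word w"
  define U where "U = as_class X op w \<cdot> p"
  have IH: "good p" "U \<in> KK" "(\<one>\<^bsub>As X op\<^esub>, U) \<in> RR"
    using snoc.IH[OF w] unfolding p_def U_def by auto
  have pC: "p \<in> C" unfolding p_def using ec[OF aX] by simp
  have wC: "as_class X op w \<in> C" by (rule cls_carrier[OF Q w])
  obtain y where y: "y \<in> X" "ii p \<cdot> ee x \<cdot> p = ee y" using IH(1) x unfolding good_def by blast
  have eaC: "ee a \<in> C" by (rule ec[OF aX])
  show ?case
  proof (cases b)
    case True
    have en: "eps_word (w @ [s]) = n + 1" using True by (simp add: n_def s eps_word_def)
    have "-(n+1) = -n + (-1)" by simp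
    then have "PP (w @ [s]) = p \<cdot> ee a [^]\<^bsub>As X op\<^esub> (-1::int)"
      unfolding en p_def n_def by (simp only: G.int_pow_mult[OF eaC])
    also have "ee a [^]\<^bsub>As X op\<^esub> (-1::int) = ii (ee a)"
      using G.int_pow_neg[OF eaC, of 1] eaC by simp
    finally have P': "PP (w @ [s]) = p \<cdot> ii (ee a)" .
    have "as_class X op (w @ [s]) \<cdot> PP (w @ [s]) = as_class X op w \<cdot> ee x \<cdot> (p \<cdot> ii (ee a))"
    proof -
      have "as_class X op (w @ [s]) = as_class X op w \<cdot> ee x" using True by (simp add: s cls_snoc(1)[OF Q w x])
      then show ?thesis by (simp only: P')
    qed
    also have "\<dots> = U \<cdot> ee y \<cdot> ii (ee a)"
      unfolding U_def by (rule G.snoc_alg1(1)) (use wC pC ec x y eaC in auto)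
    finally have eq: "as_class X op (w @ [s]) \<cdot> PP (w @ [s]) = U \<cdot> ee y \<cdot> ii (ee a)" .
    have m: "U \<cdot> ee y \<cdot> ii (ee a) \<in> KK \<and> (U, U \<cdot> ee y \<cdot> ii (ee a)) \<in> RR"
      by (rule M1[OF IH(2) y(1) aX])
    have g: "good (p \<cdot> ii (ee a))" unfolding good_def
    proof
      fix x' assume x': "x' \<in> X"
      obtain y' where y': "y' \<in> X" "ii p \<cdot> ee x' \<cdot> p = ee y'" using IH(1) x' unfolding good_def by blast
      have "y' \<in> (\<lambda>x. op x a) ` X" using Q aX y'(1) unfolding quandle_def bij_betw_def by blast
      then obtain y'' where y'': "y'' \<in> X" "y' = op y'' a" by blast
      have "ii (p \<cdot> ii (ee a)) \<cdot> ee x' \<cdot> (p \<cdot> ii (ee a)) = ii (ii (ee a)) \<cdot> (ii p \<cdot> ee x' \<cdot> p) \<cdot> ii (ee a)"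
        by (rule G.good_alg) (use pC ec x' eaC in auto)
      also have "\<dots> = ii (ii (ee a)) \<cdot> (ii (ee a) \<cdot> ee y'' \<cdot> ee a) \<cdot> ii (ee a)"
        using y'(2) gen_quandle[OF Q y''(1) aX] y''(2) by simp
      also have "\<dots> = ee y''" by (rule G.good_alg2) (use eaC ec y'' in auto)
      finally show "\<exists>y\<in>X. ii (p \<cdot> ii (ee a)) \<cdot> ee x' \<cdot> (p \<cdot> ii (ee a)) = ee y" using y'' by blast
    qed
    have r: "(\<one>\<^bsub>As X op\<^esub>, as_class X op (w @ [s]) \<cdot> PP (w @ [s])) \<in> RR"
      unfolding eq by (rule rtrancl_trans[OF IH(3) conjunct2[OF m]])
    have k: "as_class X op (w @ [s]) \<cdot> PP (w @ [s]) \<in> KK" unfolding eq using m by blast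
    have g': "good (PP (w @ [s]))" unfolding P' by (rule g)
    show ?thesis using r k g' by blast
  next
    case False
    have en: "eps_word (w @ [s]) = n - 1" using False by (simp add: n_def s eps_word_def)
    have "-(n - 1) = -n + 1" by simp
    then have P': "PP (w @ [s]) = p \<cdot> ee a"
      unfolding en p_def n_def by (simp only: G.int_pow_mult[OF eaC] G.int_pow_1[OF eaC])
    have "as_class X op (w @ [s]) \<cdot> PP (w @ [s]) = as_class X op w \<cdot> ii (ee x) \<cdot> (p \<cdot> ee a)"
    proof -
      have "as_class X op (w @ [s]) = as_class X op w \<cdot> ii (ee x)" using False by (simp add: s cls_snoc(2)[OF Q w x])
      then show ?thesis by (simp only: P')
    qed
    also have "\<dots> = U \<cdot> ii (ee y) \<cdot> ee a"
      unfolding U_def by (rule G.snoc_alg1(2)) (use wC pC ec x y eaC in auto)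
    finally have eq: "as_class X op (w @ [s]) \<cdot> PP (w @ [s]) = U \<cdot> ii (ee y) \<cdot> ee a" .
    have m: "U \<cdot> ii (ee y) \<cdot> ee a \<in> KK \<and> (U, U \<cdot> ii (ee y) \<cdot> ee a) \<in> RR"
      by (rule M2[OF IH(2) aX y(1)])
    have g: "good (p \<cdot> ee a)" unfolding good_def
    proof
      fix x' assume x': "x' \<in> X"
      obtain y' where y': "y' \<in> X" "ii p \<cdot> ee x' \<cdot> p = ee y'" using IH(1) x' unfolding good_def by blast
      have oX: "op y' a \<in> X" using Q aX y'(1) unfolding quandle_def by blast
      have "ii (p \<cdot> ee a) \<cdot> ee x' \<cdot> (p \<cdot> ee a) = ii (ee a) \<cdot> (ii p \<cdot> ee x' \<cdot> p) \<cdot> ee a"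
        by (rule G.good_alg) (use pC ec x' eaC in auto)
      also have "\<dots> = ee (op y' a)" using y'(2) gen_quandle[OF Q y'(1) aX] by simp
      finally show "\<exists>y\<in>X. ii (p \<cdot> ee a) \<cdot> ee x' \<cdot> (p \<cdot> ee a) = ee y" using oX by blast
    qed
    have r: "(\<one>\<^bsub>As X op\<^esub>, as_class X op (w @ [s]) \<cdot> PP (w @ [s])) \<in> RR"
      unfolding eq by (rule rtrancl_trans[OF IH(3) conjunct2[OF m]])
    have k: "as_class X op (w @ [s]) \<cdot> PP (w @ [s]) \<in> KK" unfolding eq using m by blast
    have g': "good (PP (w @ [s]))" unfolding P' by (rule g)
    show ?thesis using r k g' by blast
  qed
qed

lemma reach: assumes g: "g \<in> KK" shows "(\<one>\<^bsub>As X op\<^esub>, g) \<in> RR"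
proof -
  have gC: "g \<in> C" and g0: "eps0 g = 0" using g by (auto simp: kk_iff)
  define w where "w = as_rep g"
  have w: "w \<in> lists (X \<times> UNIV)" and gw: "g = as_class X op w"
    using carrier_rep[OF Q gC] unfolding w_def by auto
  have e: "eps_word w = 0" using g0 unfolding w_def eps0_def .
  have "PP w = \<one>\<^bsub>As X op\<^esub>" using e by simp
  then have "as_class X op w \<cdot> PP w = g" using gw gC by simp
  then show ?thesis using main[OF w] by simp
qed

lemma reach_all: "\<forall>x\<in>KK. \<forall>y\<in>KK. (x, y) \<in> RR"
proof (intro ballI)
  fix x y assume x: "x \<in> KK" and y: "y \<in> KK"
  have "(x, \<one>\<^bsub>As X op\<^esub>) \<in> RR" using sym_rt[OF reach[OF x]] .
  then show "(x, y) \<in> RR" using reach[OF y] by (rule rtrancl_trans)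
qed

end

theorem proposition5p2:
  fixes X :: "'a set" and op :: "'a \<Rightarrow> 'a \<Rightarrow> 'a" and a :: 'a
  assumes "quandle X op" and "quandle_connected X op" and "a \<in> X"
  shows "quandle_connected (tilde_carrier X op) (tilde_op X op a)"
proof -
  interpret qa X op a by (rule qa.intro) (rule assms)+
  show ?thesis unfolding quandle_connected_def using reach_all by blast
qed

end
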